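(* Let $\theta_1,\theta_2>0$, $\theta=\theta_1+\theta_2$, $p=\theta_1/\theta$, and let $\{\xi(t)\}_{t\ge0}$ be the Fleming–Viot process on $[0,1]$ with generator \[ \mathcal{L}g(x)=x\big(g(1)-g(x)\big)+(1-x)\big(g(0)-g(x)\big)+\tfrac12(\theta_1-\theta x)g'(x). \] Writing $\mathbb{E}_x$ for expectation given $\xi(0)=x$, for $n=0,1,\ldots$ \begin{align*} \mathbb{E}_x\big[(\xi(t)-p)^n\big]&=e^{-t(1+n\theta/2)}(x-p)^n\\ &\quad+\frac{2/\theta}{n+2/\theta}\Big[p(1-p)^n+(-1)^n(1-p)p^n\Big]\Big[1-e^{-t(1+n\theta/2)}\Big]\\ &\quad+\frac{(x-p)e^{-\theta t/2}(2/\theta)}{n-1+2/\theta}\Big[(1-p)^n-(-1)^np^n\Big]\Big[1-e^{-t(1+(n-1)\theta/2)}\Big]. \end{align*}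
   Context: $\{\xi(t)\}$ is the two-type star-shaped $\Lambda$-Fleming–Viot process with mutation: at rate 1 the whole population is replaced by the offspring of a single randomly chosen individual, and mutation occurs along lines at rate $\theta/2$ with new type 1 with probability $p$; $\xi(t)$ is the frequency of type 1. *)

theory Defs
  imports "HOL-Probability.Probability"
begin

text \<open>Pathwise construction of the two-type star-shaped Fleming-Viot process with
generator  L g(x) = x (g 1 - g x) + (1 - x)(g 0 - g x) + 1/2 (theta1 - theta x) g'(x).
It is a piecewise-deterministic Markov process: between jumps it follows the flow
y' = (theta1 - theta y)/2, i.e. y(s) = p + (y0 - p) exp(-theta s/2); at rate 1 it jumps
to 1 with probability equal to the current state and to 0 otherwise.
The randomness is an i.i.d. sequence of pairs (E_k, U_k) with E_k ~ Exp(1) (holding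
times) and U_k ~ Uniform[0,1] (marks deciding the jump target).\<close>

definition fv_flow :: "real \<Rightarrow> real \<Rightarrow> real \<Rightarrow> real \<Rightarrow> real" where
  "fv_flow \<theta> p s y = p + (y - p) * exp (- (\<theta> / 2) * s)"

fun fv_jump_time :: "(nat \<Rightarrow> real \<times> real) \<Rightarrow> nat \<Rightarrow> real" where
  "fv_jump_time \<omega> 0 = 0"
| "fv_jump_time \<omega> (Suc k) = fv_jump_time \<omega> k + fst (\<omega> k)"

fun fv_state :: "real \<Rightarrow> real \<Rightarrow> real \<Rightarrow> (nat \<Rightarrow> real \<times> real) \<Rightarrow> nat \<Rightarrow> real" where
  "fv_state \<theta> p x \<omega> 0 = x"
| "fv_state \<theta> p x \<omega> (Suc k) =
     (if snd (\<omega> k) < fv_flow \<theta> p (fst (\<omega> k)) (fv_state \<theta> p x \<omega> k) then 1 else 0)"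

definition fv_xi :: "real \<Rightarrow> real \<Rightarrow> real \<Rightarrow> (nat \<Rightarrow> real \<times> real) \<Rightarrow> real \<Rightarrow> real" where
  "fv_xi \<theta>\<^sub>1 \<theta>\<^sub>2 x \<omega> t =
     (let \<theta> = \<theta>\<^sub>1 + \<theta>\<^sub>2; p = \<theta>\<^sub>1 / \<theta>;
          k = (LEAST k. t < fv_jump_time \<omega> (Suc k))
      in fv_flow \<theta> p (t - fv_jump_time \<omega> k) (fv_state \<theta> p x \<omega> k))"

definition fv_space :: "(nat \<Rightarrow> real \<times> real) measure" where
  "fv_space = (\<Pi>\<^sub>M i\<in>UNIV. (density lborel (exponential_density 1)
                             \<Otimes>\<^sub>M uniform_measure lborel {0..1}))"

end

theory Submission
  imports Defs "HOL-Real_Asymp.Real_Asymp"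
begin

abbreviation "nuE \<equiv> density lborel (exponential_density 1)"
abbreviation "UU \<equiv> uniform_measure lborel {0..(1::real)}"
abbreviation "FVM \<equiv> nuE \<Otimes>\<^sub>M UU"

lemma prob_nuE: "prob_space nuE" by (rule prob_space_exponential_density) simp
lemma prob_UU: "prob_space UU" by (intro prob_space_uniform_measure) auto
lemma prob_FVM: "prob_space FVM"
  by (intro prob_space_pair prob_nuE prob_UU)

interpretation FV: sequence_space FVM
  by (simp add: sequence_space_def product_prob_space_def product_prob_space_axioms_def prob_FVM
      product_sigma_finite_def prob_space_imp_sigma_finite)

lemma fv_space_eq: "fv_space = FV.S" unfolding fv_space_def by simp

lemma meas_fst[measurable]: "(\<lambda>\<omega>. fst (\<omega> k)) \<in> borel_measurable fv_space"
  unfolding fv_space_def by measurable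
lemma meas_snd[measurable]: "(\<lambda>\<omega>. snd (\<omega> k)) \<in> borel_measurable fv_space"
  unfolding fv_space_def by measurable

lemma meas_jt[measurable]: "(\<lambda>\<omega>. fv_jump_time \<omega> k) \<in> borel_measurable fv_space"
  by (induction k) simp_all

lemma meas_flow[measurable]: "(\<lambda>(s,y). fv_flow th p s y) \<in> borel_measurable (borel \<Otimes>\<^sub>M borel)"
  unfolding fv_flow_def by measurable

lemma meas_state[measurable]: "(\<lambda>\<omega>. fv_state th p x \<omega> k) \<in> borel_measurable fv_space"
  by (induction k) (simp_all add: fv_flow_def)

lemma meas_xi[measurable]: "(\<lambda>\<omega>. fv_xi th1 th2 x \<omega> t) \<in> borel_measurable fv_space"
  unfolding fv_xi_def Let_def fv_flow_def by measurable

definition Good :: "(nat \<Rightarrow> real \<times> real) \<Rightarrow> bool" where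
  "Good \<omega> \<longleftrightarrow> (\<forall>k. 0 \<le> fst (\<omega> k)) \<and> (\<forall>N::nat. \<exists>k. real N < fv_jump_time \<omega> k)"

lemma meas_Good[measurable]: "Measurable.pred fv_space Good"
  unfolding Good_def by measurable

lemma Good_ex: "Good \<omega> \<Longrightarrow> \<exists>k. t < fv_jump_time \<omega> k"
proof -
  assume g: "Good \<omega>"
  obtain N :: nat where "t < real N" using reals_Archimedean2 by blast
  moreover obtain k where "real N < fv_jump_time \<omega> k" using g unfolding Good_def by blast
  ultimately show ?thesis by (meson less_trans)
qed

lemma jt_mono: "(\<forall>k. 0 \<le> fst (\<omega> k)) \<Longrightarrow> k \<le> j \<Longrightarrow> fv_jump_time \<omega> k \<le> fv_jump_time \<omega> j"
proof (induction j)
  case 0 then show ?case by simp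
next
  case (Suc j)
  then show ?case
    by (cases "k = Suc j") (auto simp: le_Suc_eq intro: order_trans[of _ "fv_jump_time \<omega> j"] add_increasing2)
qed

lemma jt_nonneg: "(\<forall>k. 0 \<le> fst (\<omega> k)) \<Longrightarrow> 0 \<le> fv_jump_time \<omega> k"
  using jt_mono[of \<omega> 0 k] by simp

lemma jt_cn: "fv_jump_time (case_nat (e,u) \<omega>) (Suc k) = e + fv_jump_time \<omega> k"
  by (induction k) auto

lemma state_cn: "fv_state th p x (case_nat (e,u) \<omega>) (Suc k) =
   fv_state th p (if u < fv_flow th p e x then 1 else 0) \<omega> k"
  by (induction k) auto

lemma Good_cn: "Good (case_nat (e,u) \<omega>) \<longleftrightarrow> 0 \<le> e \<and> Good \<omega>"
proof
  assume g: "Good (case_nat (e,u) \<omega>)"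
  have e: "0 \<le> e" using g unfolding Good_def by (metis fst_conv nat.case(1))
  have f: "\<forall>k. 0 \<le> fst (\<omega> k)" using g unfolding Good_def by (metis nat.case(2))
  have "\<exists>k. real N < fv_jump_time \<omega> k" for N :: nat
  proof -
    obtain k where k: "real N + e < fv_jump_time (case_nat (e,u) \<omega>) k" using Good_ex[OF g] by blast
    show ?thesis
    proof (cases k)
      case 0 then show ?thesis using k e by simp
    next
      case (Suc j) then show ?thesis using k jt_cn[of e u \<omega> j] by (intro exI[of _ j]) simp
    qed
  qed
  with e f show "0 \<le> e \<and> Good \<omega>" unfolding Good_def by blast
next
  assume a: "0 \<le> e \<and> Good \<omega>"
  have f: "\<forall>k. 0 \<le> fst (case_nat (e,u) \<omega> k)" using a unfolding Good_def by (auto split: nat.split)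
  have "\<exists>k. real N < fv_jump_time (case_nat (e,u) \<omega>) k" for N :: nat
  proof -
    obtain k where "real N < fv_jump_time \<omega> k" using a unfolding Good_def by blast
    then show ?thesis using a jt_cn[of e u \<omega> k] by (intro exI[of _ "Suc k"]) simp
  qed
  with f show "Good (case_nat (e,u) \<omega>)" unfolding Good_def by blast
qed

lemma xi_early:
  assumes "t < e"
  shows "fv_xi th1 th2 x (case_nat (e,u) \<omega>) t = fv_flow (th1+th2) (th1/(th1+th2)) t x"
proof -
  have "(LEAST k. t < fv_jump_time (case_nat (e,u) \<omega>) (Suc k)) = 0"
    using assms by (intro Least_eq_0) (simp add: jt_cn[of e u \<omega> 0, simplified])
  then show ?thesis unfolding fv_xi_def Let_def by simp
qed

lemma xi_shift:
  assumes g: "Good \<omega>" and "0 \<le> e" and "e \<le> t"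
  shows "fv_xi th1 th2 x (case_nat (e,u) \<omega>) t =
    fv_xi th1 th2 (if u < fv_flow (th1+th2) (th1/(th1+th2)) e x then 1 else 0) \<omega> (t - e)"
proof -
  define P where "P k \<longleftrightarrow> t < fv_jump_time (case_nat (e,u) \<omega>) (Suc k)" for k
  obtain k where k: "t - e < fv_jump_time \<omega> (Suc k)"
  proof -
    obtain j where "t - e < fv_jump_time \<omega> j" using Good_ex[OF g] by blast
    moreover have "fv_jump_time \<omega> j \<le> fv_jump_time \<omega> (Suc j)"
      using g unfolding Good_def by (intro jt_mono) auto
    ultimately show ?thesis using that by (meson less_le_trans)
  qed
  have "P (Suc k)" using k unfolding P_def jt_cn by simp
  moreover have "\<not> P 0" using assms unfolding P_def by (simp add: jt_cn[of e u \<omega> 0, simplified])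
  ultimately have L: "(LEAST k. P k) = Suc (LEAST m. P (Suc m))" by (rule Least_Suc)
  have PS: "P (Suc m) \<longleftrightarrow> t - e < fv_jump_time \<omega> (Suc m)" for m
    unfolding P_def jt_cn by linarith
  define th where "th = th1 + th2"
  define p where "p = th1 / (th1 + th2)"
  define y0 where "y0 = (if u < fv_flow th p e x then 1 else (0::real))"
  have L2: "(LEAST m. P (Suc m)) = (LEAST m. t - e < fv_jump_time \<omega> (Suc m))"
    using PS by simp
  have "fv_xi th1 th2 x (case_nat (e,u) \<omega>) t =
     fv_flow th p (t - fv_jump_time (case_nat (e,u) \<omega>) (LEAST k. P k)) (fv_state th p x (case_nat (e,u) \<omega>) (LEAST k. P k))"
    by (simp add: fv_xi_def Let_def P_def th_def p_def)
  also have "\<dots> = fv_flow th p (t - e - fv_jump_time \<omega> (LEAST m. t - e < fv_jump_time \<omega> (Suc m)))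
      (fv_state th p y0 \<omega> (LEAST m. t - e < fv_jump_time \<omega> (Suc m)))"
    unfolding L jt_cn state_cn L2 y0_def by (simp add: algebra_simps)
  also have "\<dots> = fv_xi th1 th2 y0 \<omega> (t - e)"
    by (simp add: fv_xi_def Let_def th_def p_def)
  finally show ?thesis by (simp add: y0_def th_def p_def)
qed

lemma prob_fv: "prob_space fv_space"
  by (simp add: fv_space_eq FV.P.prob_space_axioms)

lemma AE_nuE_nonneg: "AE e in nuE. 0 \<le> e"
  by (subst AE_density) (auto simp: exponential_density_def)

lemma AE_FVM_nonneg: "AE s in FVM. 0 \<le> fst s"
proof -
  interpret UP: prob_space UU by (rule prob_UU)
  have "AE e in distr FVM nuE fst. 0 \<le> e"
    by (subst UP.distr_pair_fst) (rule AE_nuE_nonneg)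
  then show ?thesis by (rule AE_distrD[rotated]) simp
qed

lemma AE_fv_nonneg: "AE \<omega> in fv_space. \<forall>k. 0 \<le> fst (\<omega> k)"
  unfolding AE_all_countable fv_space_def
  by (intro allI AE_PiM_component) (auto simp: prob_FVM AE_FVM_nonneg)

lemma nn_nuE_exp: "(\<integral>\<^sup>+e. ennreal (exp (- e)) \<partial>nuE) = ennreal (1/2)"
proof -
  have "(\<integral>\<^sup>+e. ennreal (exp (- e)) \<partial>nuE) = (\<integral>\<^sup>+e. ennreal (exponential_density 1 e) * ennreal (exp (- e)) \<partial>lborel)"
    by (subst nn_integral_density) auto
  also have "\<dots> = (\<integral>\<^sup>+e. ennreal (exp (-2*e)) * indicator {0..} e \<partial>lborel)"
    by (intro nn_integral_cong) (auto simp: exponential_density_def ennreal_mult'[symmetric] mult_exp_exp split: split_indicator)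
  also have "\<dots> = ennreal (0 - (- exp (-2*0)/2))"
  proof (rule nn_integral_FTC_atLeast)
    show "\<And>x. 0 \<le> x \<Longrightarrow> ((\<lambda>x. - exp (-2*x)/2) has_real_derivative exp (-2*x)) (at x)"
      by (auto intro!: derivative_eq_intros)
    show "((\<lambda>x::real. - exp (-2*x)/2) \<longlongrightarrow> 0) at_top"
      by real_asymp
  qed auto
  also have "\<dots> = ennreal (1/2)" by simp
  finally show ?thesis .
qed

lemma meas_cn[measurable]: "(\<lambda>(s,\<omega>). case_nat s \<omega>) \<in> measurable (FVM \<Otimes>\<^sub>M fv_space) fv_space"
  unfolding fv_space_def by measurable

interpretation FVP: pair_sigma_finite FVM fv_space
  by (simp add: pair_sigma_finite_def prob_FVM prob_fv prob_space_imp_sigma_finite)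

lemma iter: "distr (FVM \<Otimes>\<^sub>M fv_space) fv_space (\<lambda>(s,\<omega>). case_nat s \<omega>) = fv_space"
  using FV.PiM_iter by (simp add: fv_space_eq)

lemma first_step_nn:
  assumes [measurable]: "f \<in> borel_measurable fv_space"
  shows "(\<integral>\<^sup>+\<omega>. f \<omega> \<partial>fv_space) = (\<integral>\<^sup>+s. (\<integral>\<^sup>+\<omega>. f (case_nat s \<omega>) \<partial>fv_space) \<partial>FVM)"
proof -
  have "(\<integral>\<^sup>+\<omega>. f \<omega> \<partial>fv_space) = (\<integral>\<^sup>+\<omega>. f \<omega> \<partial>distr (FVM \<Otimes>\<^sub>M fv_space) fv_space (\<lambda>(s,\<omega>). case_nat s \<omega>))"
    by (simp add: iter)
  also have "\<dots> = (\<integral>\<^sup>+x. f (case_nat (fst x) (snd x)) \<partial>(FVM \<Otimes>\<^sub>M fv_space))"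
    by (subst nn_integral_distr) (auto simp: split_beta')
  also have "\<dots> = (\<integral>\<^sup>+s. (\<integral>\<^sup>+\<omega>. f (case_nat s \<omega>) \<partial>fv_space) \<partial>FVM)"
    by (subst FVP.M2.nn_integral_fst[symmetric]) auto
  finally show ?thesis .
qed

lemma first_step:
  fixes f :: "_ \<Rightarrow> real"
  assumes [measurable]: "f \<in> borel_measurable fv_space" and B: "\<And>\<omega>. \<bar>f \<omega>\<bar> \<le> B"
  shows "(\<integral>\<omega>. f \<omega> \<partial>fv_space) = (\<integral>s. (\<integral>\<omega>. f (case_nat s \<omega>) \<partial>fv_space) \<partial>FVM)"
    and "integrable FVM (\<lambda>s. \<integral>\<omega>. f (case_nat s \<omega>) \<partial>fv_space)"
proof -
  interpret PP: prob_space "FVM \<Otimes>\<^sub>M fv_space" by (intro prob_space_pair prob_FVM prob_fv)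
  have int: "integrable (FVM \<Otimes>\<^sub>M fv_space) (\<lambda>x. f (case_nat (fst x) (snd x)))"
    by (rule PP.integrable_const_bound[where B=B]) (auto simp: B)
  have "(\<integral>\<omega>. f \<omega> \<partial>fv_space) = (\<integral>\<omega>. f \<omega> \<partial>distr (FVM \<Otimes>\<^sub>M fv_space) fv_space (\<lambda>(s,\<omega>). case_nat s \<omega>))"
    by (simp add: iter)
  also have "\<dots> = (\<integral>x. f (case_nat (fst x) (snd x)) \<partial>(FVM \<Otimes>\<^sub>M fv_space))"
    by (subst integral_distr) (auto simp: split_beta')
  also have "\<dots> = (\<integral>s. (\<integral>\<omega>. f (case_nat s \<omega>) \<partial>fv_space) \<partial>FVM)"
    using FVP.integral_fst'[OF int] by simp
  finally show "(\<integral>\<omega>. f \<omega> \<partial>fv_space) = (\<integral>s. (\<integral>\<omega>. f (case_nat s \<omega>) \<partial>fv_space) \<partial>FVM)" .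
  show "integrable FVM (\<lambda>s. \<integral>\<omega>. f (case_nat s \<omega>) \<partial>fv_space)"
    using FVP.integrable_fst'[OF int] by simp
qed

lemma nn_FVM_exp: "(\<integral>\<^sup>+s. ennreal (exp (- fst s)) \<partial>FVM) = ennreal (1/2)"
proof -
  interpret UP: prob_space UU by (rule prob_UU)
  have "(\<integral>\<^sup>+s. ennreal (exp (- fst s)) \<partial>FVM) = (\<integral>\<^sup>+e. \<integral>\<^sup>+u. ennreal (exp (- e)) \<partial>UU \<partial>nuE)"
    using UP.nn_integral_fst[where f="\<lambda>s. ennreal (exp (- fst s))"] by simp
  also have "\<dots> = (\<integral>\<^sup>+e. ennreal (exp (- e)) \<partial>nuE)"
    by (simp add: UP.emeasure_space_1)
  finally show ?thesis using nn_nuE_exp by simp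
qed

lemma nn_jt: "(\<integral>\<^sup>+\<omega>. ennreal (exp (- fv_jump_time \<omega> k)) \<partial>fv_space) = ennreal ((1/2)^k)"
proof (induction k)
  case 0 then show ?case using prob_space.emeasure_space_1[OF prob_fv] by simp
next
  case (Suc k)
  have eq: "fv_jump_time (case_nat s \<omega>) (Suc k) = fst s + fv_jump_time \<omega> k" for s \<omega>
    using jt_cn[of "fst s" "snd s" \<omega> k] by simp
  have "(\<integral>\<^sup>+\<omega>. ennreal (exp (- fv_jump_time \<omega> (Suc k))) \<partial>fv_space)
     = (\<integral>\<^sup>+s. (\<integral>\<^sup>+\<omega>. ennreal (exp (- fst s)) * ennreal (exp (- fv_jump_time \<omega> k)) \<partial>fv_space) \<partial>FVM)"
    by (subst first_step_nn) (auto simp del: fv_jump_time.simps simp: eq ennreal_mult'[symmetric] mult_exp_exp intro!: nn_integral_cong)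
  also have "\<dots> = (\<integral>\<^sup>+s. ennreal (exp (- fst s)) * ennreal ((1/2)^k) \<partial>FVM)"
    by (subst nn_integral_cmult) (auto simp: Suc)
  also have "\<dots> = ennreal (1/2) * ennreal ((1/2)^k)"
    by (subst nn_integral_multc) (auto simp: nn_FVM_exp)
  also have "\<dots> = ennreal ((1/2)^Suc k)"
    using ennreal_mult[of "1/2::real" "(1/2)^k"] by simp
  finally show ?case .
qed

lemma AE_fv_infty: "AE \<omega> in fv_space. \<exists>k. real N < fv_jump_time \<omega> k"
proof -
  interpret P: prob_space fv_space by (rule prob_fv)
  let ?A = "{\<omega> \<in> space fv_space. \<not> (\<exists>k. real N < fv_jump_time \<omega> k)}"
  have Am[measurable]: "?A \<in> sets fv_space" by measurable
  have bound: "P.prob ?A \<le> exp (real N) * (1/2)^k" for k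
  proof -
    have "emeasure fv_space ?A = (\<integral>\<^sup>+\<omega>. indicator ?A \<omega> \<partial>fv_space)" by simp
    also have "\<dots> \<le> (\<integral>\<^sup>+\<omega>. ennreal (exp (real N)) * ennreal (exp (- fv_jump_time \<omega> k)) \<partial>fv_space)"
    proof (intro nn_integral_mono)
      fix \<omega> assume "\<omega> \<in> space fv_space"
      show "indicator ?A \<omega> \<le> ennreal (exp (real N)) * ennreal (exp (- fv_jump_time \<omega> k))"
      proof (cases "\<omega> \<in> ?A")
        case True
        then have "fv_jump_time \<omega> k \<le> real N" by (auto simp: not_less)
        then have "1 \<le> exp (real N) * exp (- fv_jump_time \<omega> k)"
          by (simp add: mult_exp_exp)
        then show ?thesis using True by (simp add: ennreal_mult'[symmetric])
      qed simp
    qed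
    also have "\<dots> = ennreal (exp (real N)) * ennreal ((1/2)^k)"
      by (subst nn_integral_cmult) (auto simp: nn_jt)
    finally show ?thesis
      by (simp add: P.emeasure_eq_measure ennreal_mult'[symmetric])
  qed
  have "P.prob ?A \<le> 0"
  proof (rule field_le_epsilon)
    fix \<epsilon> :: real assume e: "0 < \<epsilon>"
    obtain k where "(1/2::real)^k < \<epsilon> / exp (real N)"
      using real_arch_pow_inv[of "\<epsilon> / exp (real N)" "1/2"] e by auto
    then have "exp (real N) * (1/2)^k < \<epsilon>" by (simp add: field_simps)
    then show "P.prob ?A \<le> 0 + \<epsilon>" using bound[of k] by simp
  qed
  then have "P.prob ?A = 0" by (meson order_antisym measure_nonneg)
  then show ?thesis
    by (subst AE_iff_measurable[OF _ refl]) (auto simp: P.emeasure_eq_measure)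
qed

lemma AE_Good: "AE \<omega> in fv_space. Good \<omega>"
proof -
  have "AE \<omega> in fv_space. \<forall>N::nat. \<exists>k. real N < fv_jump_time \<omega> k"
    unfolding AE_all_countable using AE_fv_infty by blast
  with AE_fv_nonneg show ?thesis unfolding Good_def by eventually_elim auto
qed

context
  fixes th1 th2 :: real and n :: nat
  assumes th1: "0 < th1" and th2: "0 < th2"
begin

definition "TH = th1 + th2"
definition "PP = th1 / (th1 + th2)"
definition "flw s y = fv_flow TH PP s y"
definition "phi x t \<omega> = (if Good \<omega> then (fv_xi th1 th2 x \<omega> t - PP) ^ n else 0)"
definition "mm x t = (\<integral>\<omega>. phi x t \<omega> \<partial>fv_space)"

lemma TH_pos: "0 < TH" using th1 th2 by (simp add: TH_def)
lemma PP_range: "0 < PP" "PP < 1" using th1 th2 by (auto simp: PP_def field_simps)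

lemma flw_range:
  assumes "0 \<le> s" "0 \<le> y" "y \<le> 1"
  shows "0 \<le> flw s y" "flw s y \<le> 1"
proof -
  have r: "0 < exp (- (TH/2) * s)" "exp (- (TH/2) * s) \<le> 1" using TH_pos assms by auto
  have eq: "flw s y = (1 - exp (- (TH/2) * s)) * PP + exp (- (TH/2) * s) * y"
    by (simp add: flw_def fv_flow_def algebra_simps)
  show "0 \<le> flw s y" unfolding eq using r assms PP_range by (intro add_nonneg_nonneg mult_nonneg_nonneg) auto
  have "(1 - exp (- (TH/2) * s)) * PP + exp (- (TH/2) * s) * y \<le> (1 - exp (- (TH/2) * s)) * 1 + exp (- (TH/2) * s) * 1"
    using r assms PP_range by (intro add_mono mult_left_mono) auto
  then show "flw s y \<le> 1" unfolding eq by simp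
qed

lemma state_range: "0 \<le> x \<Longrightarrow> x \<le> 1 \<Longrightarrow> 0 \<le> fv_state th p x \<omega> k \<and> fv_state th p x \<omega> k \<le> 1"
  by (cases k) auto

lemma xi_range:
  assumes g: "Good \<omega>" and x: "0 \<le> x" "x \<le> 1" and t: "0 \<le> t"
  shows "0 \<le> fv_xi th1 th2 x \<omega> t \<and> fv_xi th1 th2 x \<omega> t \<le> 1"
proof -
  define P where "P k \<longleftrightarrow> t < fv_jump_time \<omega> (Suc k)" for k
  define k where "k = (LEAST k. P k)"
  have nn: "\<forall>k. 0 \<le> fst (\<omega> k)" using g by (simp add: Good_def)
  have "fv_jump_time \<omega> k \<le> t"
  proof (cases k)
    case 0 then show ?thesis using t by simp
  next
    case (Suc j)
    then have "\<not> P j" unfolding k_def by (intro not_less_Least) simp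
    then show ?thesis by (simp add: P_def Suc not_less)
  qed
  then have "0 \<le> t - fv_jump_time \<omega> k" by simp
  moreover have "fv_xi th1 th2 x \<omega> t = flw (t - fv_jump_time \<omega> k) (fv_state TH PP x \<omega> k)"
    by (simp add: fv_xi_def Let_def flw_def TH_def PP_def k_def P_def)
  ultimately show ?thesis using flw_range state_range[OF x] by metis
qed

lemma phi_bound: "0 \<le> x \<Longrightarrow> x \<le> 1 \<Longrightarrow> 0 \<le> t \<Longrightarrow> \<bar>phi x t \<omega>\<bar> \<le> 1"
proof (cases "Good \<omega>")
  case True
  assume x: "0 \<le> x" "x \<le> 1" and t: "0 \<le> t"
  have "\<bar>fv_xi th1 th2 x \<omega> t - PP\<bar> \<le> 1" using xi_range[OF True x t] PP_range by auto
  then have "\<bar>fv_xi th1 th2 x \<omega> t - PP\<bar> ^ n \<le> 1" by (simp add: power_le_one)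
  then show ?thesis using True by (simp add: phi_def power_abs)
qed (simp add: phi_def)

lemma meas_phi[measurable]: "phi x t \<in> borel_measurable fv_space"
  unfolding phi_def by measurable

lemma phi_cn:
  assumes t: "0 \<le> t"
  shows "phi x t (case_nat (e,u) \<omega>) = indicator {t<..} e * (if Good \<omega> then (flw t x - PP) ^ n else 0)
    + indicator {0..t} e * phi (if u < flw e x then 1 else 0) (t - e) \<omega>"
proof (cases "e < 0")
  case True then show ?thesis using t by (simp add: phi_def Good_cn indicator_def)
next
  case False
  show ?thesis
  proof (cases "t < e")
    case True then show ?thesis using False
      by (simp add: phi_def Good_cn xi_early flw_def TH_def PP_def indicator_def)
  next
    case n: False
    show ?thesis
    proof (cases "Good \<omega>")
      case True then show ?thesis using False n
        by (simp add: phi_def Good_cn xi_shift flw_def TH_def PP_def indicator_def)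
    qed (simp add: phi_def Good_cn indicator_def)
  qed
qed

lemma mm_eq: "mm x t = (\<integral>\<omega>. (fv_xi th1 th2 x \<omega> t - PP) ^ n \<partial>fv_space)"
  unfolding mm_def by (rule integral_cong_AE) (use AE_Good in \<open>auto simp: phi_def\<close>)

lemma inner:
  assumes t: "0 \<le> t" and x: "0 \<le> x" "x \<le> 1"
  shows "(\<integral>\<omega>. phi x t (case_nat (e,u) \<omega>) \<partial>fv_space) =
    indicator {t<..} e * (flw t x - PP) ^ n + indicator {0..t} e * (if u < flw e x then mm 1 (t - e) else mm 0 (t - e))"
proof -
  interpret P: prob_space fv_space by (rule prob_fv)
  let ?c = "indicator {t<..} e * (flw t x - PP) ^ n"
  have i1: "integrable fv_space (\<lambda>\<omega>. indicator {t<..} e * (if Good \<omega> then (flw t x - PP) ^ n else 0))"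
    by (rule P.integrable_const_bound[where B="\<bar>(flw t x - PP) ^ n\<bar>"]) (auto simp: indicator_def)
  have i2: "integrable fv_space (\<lambda>\<omega>. indicator {0..t} e * phi y (t - e) \<omega>)" if "0 \<le> y" "y \<le> 1" for y
  proof (rule P.integrable_const_bound[where B=1])
    show "AE \<omega> in fv_space. norm (indicator {0..t} e * phi y (t - e) \<omega>) \<le> 1"
      using phi_bound[OF that, of "t - e"] by (auto simp: indicator_def)
  qed simp
  have c: "(\<integral>\<omega>. (if Good \<omega> then (flw t x - PP) ^ n else 0) \<partial>fv_space) = (flw t x - PP) ^ n"
  proof -
    have "(\<integral>\<omega>. (if Good \<omega> then (flw t x - PP) ^ n else 0) \<partial>fv_space) = (\<integral>\<omega>. (flw t x - PP) ^ n \<partial>fv_space)"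
    proof (rule integral_cong_AE)
      show "AE \<omega> in fv_space. (if Good \<omega> then (flw t x - PP) ^ n else 0) = (flw t x - PP) ^ n"
        using AE_Good by eventually_elim simp
    qed measurable
    then show ?thesis by (simp add: P.prob_space)
  qed
  show ?thesis
    unfolding phi_cn[OF t]
    by (subst Bochner_Integration.integral_add[OF i1 i2]) (auto simp: c mm_def)
qed

end

lemma integral_UU:
  fixes A B w :: real
  assumes "0 \<le> w" "w \<le> 1"
  shows "(\<integral>u. (if u < w then A else B) \<partial>UU) = w * A + (1 - w) * B"
proof -
  interpret UP: prob_space UU by (rule prob_UU)
  have "(\<integral>u. (if u < w then A else B) \<partial>UU) = (\<integral>u. B + (A - B) * indicator {..<w} u \<partial>UU)"
    by (intro Bochner_Integration.integral_cong) (auto simp: indicator_def)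
  also have "\<dots> = B + (A - B) * measure UU {..<w}"
    by (subst Bochner_Integration.integral_add) (auto simp: UP.prob_space intro!: UP.integrable_const_bound[where B=1])
  also have "measure UU {..<w} = w"
  proof -
    have "{0..1} \<inter> {..<w} = {0..<w}" using assms by auto
    then show ?thesis using assms by simp
  qed
  finally show ?thesis by (simp add: algebra_simps)
qed

interpretation NU: pair_sigma_finite nuE UU
  by (simp add: pair_sigma_finite_def prob_nuE prob_UU prob_space_imp_sigma_finite)

context
  fixes th1 th2 :: real and n :: nat
  assumes th1: "0 < th1" and th2: "0 < th2"
begin

definition "Kr x t a b e = indicator {t<..} e * (flw th1 th2 t x - PP th1 th2) ^ n
   + indicator {0..t} e * (flw th1 th2 e x * a (t - e) + (1 - flw th1 th2 e x) * b (t - e))"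

lemma renewal:
  assumes t: "0 \<le> t" and x: "0 \<le> x" "x \<le> 1"
  shows "mm th1 th2 n x t = (\<integral>e. Kr x t (mm th1 th2 n 1) (mm th1 th2 n 0) e \<partial>nuE)"
    and "integrable nuE (Kr x t (mm th1 th2 n 1) (mm th1 th2 n 0))"
proof -
  define K where "K s = indicator {t<..} (fst s) * (flw th1 th2 t x - PP th1 th2) ^ n
    + indicator {0..t} (fst s) * (if snd s < flw th1 th2 (fst s) x then mm th1 th2 n 1 (t - fst s) else mm th1 th2 n 0 (t - fst s))" for s
  have fs: "(\<integral>\<omega>. phi th1 th2 n x t \<omega> \<partial>fv_space) = (\<integral>s. (\<integral>\<omega>. phi th1 th2 n x t (case_nat s \<omega>) \<partial>fv_space) \<partial>FVM)"
     "integrable FVM (\<lambda>s. \<integral>\<omega>. phi th1 th2 n x t (case_nat s \<omega>) \<partial>fv_space)"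
    using first_step[of "phi th1 th2 n x t" 1] phi_bound[OF th1 th2 x t] meas_phi[OF th1 th2] by auto
  have inK: "(\<integral>\<omega>. phi th1 th2 n x t (case_nat s \<omega>) \<partial>fv_space) = K s" for s
    using inner[OF th1 th2 t x, where e="fst s" and u="snd s" and n=n] by (simp add: K_def)
  have mK: "mm th1 th2 n x t = (\<integral>s. K s \<partial>FVM)" and iK: "integrable FVM K"
    using fs unfolding mm_def[OF th1 th2] inK by simp_all
  have inner2: "(\<integral>u. K (e, u) \<partial>UU) = Kr x t (mm th1 th2 n 1) (mm th1 th2 n 0) e" for e
  proof (cases "e \<in> {0..t}")
    case True
    then have w: "0 \<le> flw th1 th2 e x" "flw th1 th2 e x \<le> 1" using flw_range[OF th1 th2 _ x] by auto
    interpret UP: prob_space UU by (rule prob_UU)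
    have "(\<integral>u. K (e, u) \<partial>UU) = (\<integral>u. indicator {t<..} e * (flw th1 th2 t x - PP th1 th2) ^ n
       + (if u < flw th1 th2 e x then mm th1 th2 n 1 (t - e) else mm th1 th2 n 0 (t - e)) \<partial>UU)"
      using True by (simp add: K_def cong: if_cong)
    also have "\<dots> = indicator {t<..} e * (flw th1 th2 t x - PP th1 th2) ^ n
       + (\<integral>u. (if u < flw th1 th2 e x then mm th1 th2 n 1 (t - e) else mm th1 th2 n 0 (t - e)) \<partial>UU)"
      by (subst Bochner_Integration.integral_add)
        (auto simp: UP.prob_space intro!: UP.integrable_const_bound[where B="\<bar>mm th1 th2 n 1 (t - e)\<bar> + \<bar>mm th1 th2 n 0 (t - e)\<bar>"])
    also have "\<dots> = Kr x t (mm th1 th2 n 1) (mm th1 th2 n 0) e"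
      using True by (simp add: integral_UU[OF w] Kr_def)
    finally show ?thesis .
  next
    case False
    interpret UP: prob_space UU by (rule prob_UU)
    show ?thesis using False by (simp add: K_def Kr_def UP.prob_space)
  qed
  have "(\<integral>s. K s \<partial>FVM) = (\<integral>e. (\<integral>u. K (e, u) \<partial>UU) \<partial>nuE)"
    using NU.integral_fst'[OF iK] by simp
  then show "mm th1 th2 n x t = (\<integral>e. Kr x t (mm th1 th2 n 1) (mm th1 th2 n 0) e \<partial>nuE)"
    using mK inner2 by simp
  show "integrable nuE (Kr x t (mm th1 th2 n 1) (mm th1 th2 n 0))"
    using NU.integrable_fst'[OF iK] inner2 by simp
qed

end

lemma measure_nuE_le: "0 \<le> t \<Longrightarrow> measure nuE {..t} = 1 - exp (- t)"
proof -
  assume t: "0 \<le> t"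
  have "emeasure nuE {..t} = ennreal (1 - exp (- t))"
    using emeasure_erlang_density[of 1 0 t] t by (simp add: erlang_CDF_0)
  moreover have "0 \<le> 1 - exp (- t)" using t by simp
  ultimately show ?thesis by (simp add: measure_def)
qed

lemma measure_nuE_gt: "0 \<le> t \<Longrightarrow> measure nuE {t<..} = exp (- t)"
proof -
  assume t: "0 \<le> t"
  interpret P: prob_space nuE by (rule prob_nuE)
  have "{t<..} = space nuE - {..t}" by auto
  then have "measure nuE {t<..} = 1 - measure nuE {..t}"
    by (simp add: P.prob_compl[symmetric])
  then show ?thesis using measure_nuE_le[OF t] by simp
qed

context
  fixes th p :: real and n :: nat
  assumes th: "0 < th"
begin

definition "lam = 1 + real n * th / 2"
definition "mu = 1 + (real n - 1) * th / 2"
definition "cnv = p * (1 - p) ^ n + (-1) ^ n * (1 - p) * p ^ n"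
definition "dnv = (1 - p) ^ n - (-1) ^ n * p ^ n"
definition "CC = (2 / th) / (real n + 2 / th) * cnv"
definition "DD = (2 / th) / (real n - 1 + 2 / th) * dnv"

definition "FF x t = exp (- t * (1 + real n * th / 2)) * (x - p) ^ n
    + (2 / th) / (real n + 2 / th) * (p * (1 - p) ^ n + (-1) ^ n * (1 - p) * p ^ n)
        * (1 - exp (- t * (1 + real n * th / 2)))
    + (x - p) * exp (- th * t / 2) * (2 / th) / (real n - 1 + 2 / th)
        * ((1 - p) ^ n - (-1) ^ n * p ^ n)
        * (1 - exp (- t * (1 + (real n - 1) * th / 2)))"

lemma FF_alt: "FF x t = exp (- t * lam) * (x - p) ^ n + CC * (1 - exp (- t * lam))
   + (x - p) * exp (- th * t / 2) * DD * (1 - exp (- t * mu))"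
proof -
  have a: "(2 / th) / (real n + 2 / th) * cnv * (1 - exp (- t * lam)) = CC * (1 - exp (- t * lam))"
    by (simp only: CC_def)
  have b: "(x - p) * exp (- th * t / 2) * (2 / th) / (real n - 1 + 2 / th) * dnv * (1 - exp (- t * mu))
     = (x - p) * exp (- th * t / 2) * DD * (1 - exp (- t * mu))"
    by (simp only: DD_def divide_inverse mult.assoc)
  have "FF x t = exp (- t * lam) * (x - p) ^ n + (2 / th) / (real n + 2 / th) * cnv * (1 - exp (- t * lam))
     + (x - p) * exp (- th * t / 2) * (2 / th) / (real n - 1 + 2 / th) * dnv * (1 - exp (- t * mu))"
    by (simp only: FF_def lam_def mu_def cnv_def dnv_def)
  then show ?thesis by (simp only: a b)
qed

lemma CC_lam: "CC * lam = cnv"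
proof -
  have h: "real n + 2 / th = (2 / th) * lam" using th by (simp add: lam_def field_simps)
  have "0 \<le> real n * th / 2" using th by simp
  then have "lam > 0" unfolding lam_def by linarith
  then show ?thesis using th unfolding CC_def h by (simp add: field_simps)
qed

lemma DD_mu: "DD * mu = dnv"
proof (cases n)
  case 0
  then have "dnv = 0" unfolding dnv_def by simp
  then show ?thesis by (simp add: DD_def)
next
  case (Suc k)
  have "0 < 2 / th" using th by simp
  moreover have "real n - 1 = real k" using Suc by simp
  ultimately have "0 < real n - 1 + 2 / th" using of_nat_0_le_iff[of k] by linarith
  then show ?thesis using th unfolding DD_def mu_def by (simp add: field_simps)
qed

lemma exp3: "exp (- th * r / 2) * exp (- r * mu) = exp (- r * lam)"
  unfolding mult_exp_exp lam_def mu_def by (rule arg_cong[where f=exp]) (simp add: field_simps)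

lemma alg1: "p * (E * a + C * (1 - E) + (1 - p) * Q * D * (1 - F)) + (1 - p) * (E * b + C * (1 - E) + (0 - p) * Q * D * (1 - F))
   = E * (p * a + (1 - p) * b) + C * (1 - E)" for E Q F C D a b :: real
  by (simp add: algebra_simps)

lemma alg2: "(E * a + C * (1 - E) + (1 - p) * Q * D * (1 - F)) - (E * b + C * (1 - E) + (0 - p) * Q * D * (1 - F))
   = E * (a - b) + Q * D - D * (Q * F)" for E Q F C D a b :: real
  by (simp add: algebra_simps)

lemma pm: "(0 - p) ^ n = (-1) ^ n * p ^ n"
  by (metis diff_0 power_minus)

lemma sum_p: "p * FF 1 r + (1 - p) * FF 0 r = CC + CC * (lam - 1) * exp (- r * lam)"
proof -
  have "p * FF 1 r + (1 - p) * FF 0 r = exp (- r * lam) * cnv + CC * (1 - exp (- r * lam))"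
    unfolding FF_alt alg1 cnv_def pm by simp
  then show ?thesis using CC_lam[symmetric] by (simp add: algebra_simps)
qed

lemma diff_p: "FF 1 r - FF 0 r = DD * (mu - 1) * exp (- r * lam) + DD * exp (- th * r / 2)"
proof -
  have "FF 1 r - FF 0 r = exp (- r * lam) * dnv + exp (- th * r / 2) * DD - DD * (exp (- th * r / 2) * exp (- r * mu))"
    unfolding FF_alt alg2 dnv_def pm by simp
  then show ?thesis using DD_mu[symmetric] exp3[of r] by (simp add: algebra_simps)
qed

lemma expeq: "a = b \<Longrightarrow> exp a = exp b" by simp

lemma FF_renewal:
  assumes t: "0 \<le> t"
  shows "has_bochner_integral nuE (\<lambda>e. indicator {t<..} e * (fv_flow th p t x - p) ^ n
     + indicator {0..t} e * (fv_flow th p e x * FF 1 (t - e) + (1 - fv_flow th p e x) * FF 0 (t - e))) (FF x t)"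
proof -
  define g where "g e = fv_flow th p e x * FF 1 (t - e) + (1 - fv_flow th p e x) * FF 0 (t - e)" for e
  define G where "G e = - CC * exp (- e) + CC * exp (- t * lam) * exp ((lam - 1) * e)
     + (x - p) * DD * (exp (- t * lam) * exp ((mu - 1) * e) - exp (- th * t / 2) * exp (- e))" for e
  define f where "f e = CC * exp (- e) + CC * exp (- t * lam) * ((lam - 1) * exp ((lam - 1) * e))
     + (x - p) * DD * (exp (- t * lam) * ((mu - 1) * exp ((mu - 1) * e)) + exp (- th * t / 2) * exp (- e))" for e
  have key: "exp (- e) * g e = f e" for e
  proof -
    have e1: "exp (- e) * exp (- (t - e) * lam) = exp (- t * lam) * exp ((lam - 1) * e)"
      unfolding mult_exp_exp by (rule expeq) (simp add: algebra_simps)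
    have e2: "exp (- (th / 2) * e) * exp (- e) * exp (- (t - e) * lam) = exp (- t * lam) * exp ((mu - 1) * e)"
      unfolding mult_exp_exp lam_def mu_def by (rule expeq) (simp add: field_simps)
    have e3: "exp (- (th / 2) * e) * exp (- e) * exp (- th * (t - e) / 2) = exp (- th * t / 2) * exp (- e)"
      unfolding mult_exp_exp by (rule expeq) (simp add: field_simps)
    have gs: "g e = (p * FF 1 (t - e) + (1 - p) * FF 0 (t - e)) + (x - p) * exp (- (th / 2) * e) * (FF 1 (t - e) - FF 0 (t - e))"
      unfolding g_def fv_flow_def by (simp add: algebra_simps)
    have "exp (- e) * g e = CC * exp (- e) + CC * (lam - 1) * (exp (- e) * exp (- (t - e) * lam))
       + (x - p) * DD * (mu - 1) * (exp (- (th / 2) * e) * exp (- e) * exp (- (t - e) * lam))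
       + (x - p) * DD * (exp (- (th / 2) * e) * exp (- e) * exp (- th * (t - e) / 2))"
      unfolding gs sum_p diff_p by (simp add: algebra_simps)
    also have "\<dots> = f e" unfolding e1 e2 e3 f_def by (simp add: algebra_simps)
    finally show ?thesis .
  qed
  have deriv: "DERIV G e :> f e" for e
    unfolding G_def f_def by (auto intro!: derivative_eq_intros simp: algebra_simps)
  have cont: "isCont f e" for e
    unfolding f_def by (intro continuous_intros)
  have hb: "has_bochner_integral lborel (\<lambda>e. f e * indicator {0..t} e) (G t - G 0)"
    using t deriv cont by (intro has_bochner_integral_FTC_Icc_real) auto
  have part2: "has_bochner_integral nuE (\<lambda>e. indicator {0..t} e * g e) (G t - G 0)"
  proof (rule has_bochner_integral_density)
    show "(\<lambda>e. indicator {0..t} e * g e) \<in> borel_measurable lborel"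
      unfolding g_def FF_def fv_flow_def by measurable
    show "has_bochner_integral lborel (\<lambda>e. exponential_density 1 e *\<^sub>R (indicator {0..t} e * g e)) (G t - G 0)"
    proof (rule has_bochner_integral_cong[THEN iffD1, OF refl _ refl hb])
      fix e :: real
      show "f e * indicator {0..t} e = exponential_density 1 e *\<^sub>R (indicator {0..t} e * g e)"
        using key[of e] by (auto simp: exponential_density_def indicator_def)
    qed
  qed (auto simp: exponential_density_def)
  have part1: "has_bochner_integral nuE (\<lambda>e. indicator {t<..} e * (fv_flow th p t x - p) ^ n)
      (exp (- t) * (fv_flow th p t x - p) ^ n)"
  proof -
    interpret P: prob_space nuE by (rule prob_nuE)
    have "has_bochner_integral nuE (indicator {t<..}) (measure nuE {t<..})"
      by (intro has_bochner_integral_real_indicator) (auto simp: less_top[symmetric] P.emeasure_finite)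
    then show ?thesis
      using measure_nuE_gt[OF t] has_bochner_integral_mult_left by fastforce
  qed
  have val: "exp (- t) * (fv_flow th p t x - p) ^ n + (G t - G 0) = FF x t"
  proof -
    have a1: "exp (- t) * (fv_flow th p t x - p) ^ n = (x - p) ^ n * exp (- t * lam)"
    proof -
      have "exp (- t) * (fv_flow th p t x - p) ^ n = (x - p) ^ n * (exp (- t) * exp (real n * (- (th / 2) * t)))"
        unfolding fv_flow_def exp_of_nat_mult by (simp add: power_mult_distrib)
      also have "exp (- t) * exp (real n * (- (th / 2) * t)) = exp (- t * lam)"
        unfolding mult_exp_exp lam_def by (rule expeq) (simp add: algebra_simps)
      finally show ?thesis .
    qed
    have a2: "exp (- t * lam) * exp ((lam - 1) * t) = exp (- t)"
      unfolding mult_exp_exp by (rule expeq) (simp add: algebra_simps)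
    have a3: "exp (- t * lam) * exp ((mu - 1) * t) = exp (- th * t / 2) * exp (- t)"
      unfolding mult_exp_exp lam_def mu_def by (rule expeq) (simp add: field_simps)
    have "G t = - CC * exp (- t) + CC * (exp (- t * lam) * exp ((lam - 1) * t))
     + (x - p) * DD * (exp (- t * lam) * exp ((mu - 1) * t) - exp (- th * t / 2) * exp (- t))"
      by (simp only: G_def mult.assoc)
    then have Gt: "G t = 0" unfolding a2 a3 by simp
    have G0: "G 0 = - CC + CC * exp (- t * lam) + (x - p) * DD * (exp (- t * lam) - exp (- th * t / 2))"
      unfolding G_def by simp
    show ?thesis
      unfolding a1 Gt G0 FF_alt using exp3[of t] by (simp add: algebra_simps)
  qed
  show ?thesis
    using has_bochner_integral_add[OF part1 part2] val by (simp add: g_def)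
qed

end

context
  fixes th1 th2 :: real and n :: nat
  assumes th1: "0 < th1" and th2: "0 < th2"
begin

abbreviation "FFt \<equiv> FF (TH th1 th2) (PP th1 th2) n"

lemma THp: "0 < TH th1 th2" using TH_pos[OF th1 th2] .

lemma Kr_F:
  assumes "0 \<le> t"
  shows "has_bochner_integral nuE (Kr th1 th2 n x t (FFt 1) (FFt 0)) (FFt x t)"
proof -
  have eq: "Kr th1 th2 n x t (FFt 1) (FFt 0) = (\<lambda>e. indicator {t<..} e * (fv_flow (TH th1 th2) (PP th1 th2) t x - PP th1 th2) ^ n
     + indicator {0..t} e * (fv_flow (TH th1 th2) (PP th1 th2) e x * FFt 1 (t - e) + (1 - fv_flow (TH th1 th2) (PP th1 th2) e x) * FFt 0 (t - e)))"
    by (rule ext) (simp only: Kr_def[OF th1 th2] flw_def[OF th1 th2])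
  show ?thesis unfolding eq by (rule FF_renewal[OF THp assms])
qed

lemma mm_bound: "0 \<le> y \<Longrightarrow> y \<le> 1 \<Longrightarrow> 0 \<le> s \<Longrightarrow> \<bar>mm th1 th2 n y s\<bar> \<le> 1"
proof -
  assume a: "0 \<le> y" "y \<le> 1" "0 \<le> s"
  interpret P: prob_space fv_space by (rule prob_fv)
  have i: "integrable fv_space (phi th1 th2 n y s)"
    by (rule P.integrable_const_bound[where B=1]) (use phi_bound[OF th1 th2 a] meas_phi[OF th1 th2] in auto)
  have b: "\<bar>phi th1 th2 n y s \<omega>\<bar> \<le> 1" for \<omega> using phi_bound[OF th1 th2 a] .
  have "mm th1 th2 n y s \<le> 1" unfolding mm_def[OF th1 th2]
    by (rule P.integral_le_const[OF i]) (use b in \<open>auto simp: abs_le_iff\<close>)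
  moreover have "-1 \<le> mm th1 th2 n y s" unfolding mm_def[OF th1 th2]
    by (rule P.integral_ge_const[OF i]) (use b in \<open>auto simp: abs_le_iff\<close>)
  ultimately show ?thesis by simp
qed

lemma FF_cont: "continuous_on {0..T} (FFt y)"
  unfolding FF_alt[OF THp] by (intro continuous_intros) auto

lemma FF_bounded: "\<exists>B. \<forall>s\<in>{0..T}. \<bar>FFt y s\<bar> \<le> B"
proof -
  have "compact (FFt y ` {0..T})" by (rule compact_continuous_image[OF FF_cont compact_Icc])
  then have "bounded (FFt y ` {0..T})" by (rule compact_imp_bounded)
  then obtain a where a: "\<forall>z\<in>FFt y ` {0..T}. norm z \<le> a" unfolding bounded_iff by blast
  have "\<forall>s\<in>{0..T}. \<bar>FFt y s\<bar> \<le> a"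
  proof
    fix s assume "s \<in> {0..T}"
    then have "FFt y s \<in> FFt y ` {0..T}" by (rule imageI)
    then show "\<bar>FFt y s\<bar> \<le> a" using a by (metis real_norm_def)
  qed
  then show ?thesis by blast
qed

definition "Dd y s = mm th1 th2 n y s - FFt y s"

lemma D_eq:
  assumes y: "0 \<le> y" "y \<le> 1" and s: "0 \<le> s"
  shows "Dd y s = (\<integral>e. indicator {0..s} e * (flw th1 th2 e y * Dd 1 (s - e) + (1 - flw th1 th2 e y) * Dd 0 (s - e)) \<partial>nuE)"
    and "integrable nuE (\<lambda>e. indicator {0..s} e * (flw th1 th2 e y * Dd 1 (s - e) + (1 - flw th1 th2 e y) * Dd 0 (s - e)))"
proof -
  have i1: "integrable nuE (Kr th1 th2 n y s (mm th1 th2 n 1) (mm th1 th2 n 0))"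
    using renewal(2)[OF th1 th2 s y] .
  have i2: "integrable nuE (Kr th1 th2 n y s (FFt 1) (FFt 0))"
    using Kr_F[OF s] by (simp add: has_bochner_integral_iff)
  have eq: "Kr th1 th2 n y s (mm th1 th2 n 1) (mm th1 th2 n 0) e - Kr th1 th2 n y s (FFt 1) (FFt 0) e
     = indicator {0..s} e * (flw th1 th2 e y * Dd 1 (s - e) + (1 - flw th1 th2 e y) * Dd 0 (s - e))" for e
    unfolding Kr_def[OF th1 th2] Dd_def by (simp add: algebra_simps)
  have "Dd y s = (\<integral>e. Kr th1 th2 n y s (mm th1 th2 n 1) (mm th1 th2 n 0) e \<partial>nuE) - (\<integral>e. Kr th1 th2 n y s (FFt 1) (FFt 0) e \<partial>nuE)"
    unfolding Dd_def using renewal(1)[OF th1 th2 s y] Kr_F[OF s] by (simp add: has_bochner_integral_iff)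
  also have "\<dots> = (\<integral>e. Kr th1 th2 n y s (mm th1 th2 n 1) (mm th1 th2 n 0) e - Kr th1 th2 n y s (FFt 1) (FFt 0) e \<partial>nuE)"
    by (rule Bochner_Integration.integral_diff[OF i1 i2, symmetric])
  finally show "Dd y s = (\<integral>e. indicator {0..s} e * (flw th1 th2 e y * Dd 1 (s - e) + (1 - flw th1 th2 e y) * Dd 0 (s - e)) \<partial>nuE)"
    unfolding eq .
  show "integrable nuE (\<lambda>e. indicator {0..s} e * (flw th1 th2 e y * Dd 1 (s - e) + (1 - flw th1 th2 e y) * Dd 0 (s - e)))"
    using Bochner_Integration.integrable_diff[OF i1 i2] unfolding eq .
qed

lemma D_zero:
  assumes T: "0 \<le> T" and y: "y \<in> {0, 1}" and s: "s \<in> {0..T}"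
  shows "Dd y s = 0"
proof -
  define S where "S = (\<lambda>(y, s). \<bar>Dd y s\<bar>) ` ({0, 1::real} \<times> {0..T})"
  obtain B0 where B0: "\<forall>s\<in>{0..T}. \<bar>FFt 0 s\<bar> \<le> B0" using FF_bounded by blast
  obtain B1 where B1: "\<forall>s\<in>{0..T}. \<bar>FFt 1 s\<bar> \<le> B1" using FF_bounded by blast
  have Sel: "\<exists>y s. y \<in> {0,1} \<and> s \<in> {0..T} \<and> z = \<bar>Dd y s\<bar>" if "z \<in> S" for z
  proof -
    from that obtain ys where ys0: "ys \<in> {0,1::real} \<times> {0..T}" "z = (\<lambda>(y, s). \<bar>Dd y s\<bar>) ys"
      unfolding S_def by (rule imageE)
    obtain y s where "ys = (y, s)" by (cases ys)
    with ys0 show ?thesis by auto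
  qed
  have bdd: "bdd_above S"
  proof (rule bdd_aboveI)
    fix z assume "z \<in> S"
    then obtain y s where ys: "y \<in> {0,1}" "s \<in> {0..T}" "z = \<bar>Dd y s\<bar>" using Sel by blast
    have m: "\<bar>mm th1 th2 n y s\<bar> \<le> 1" using ys by (intro mm_bound) auto
    have f: "\<bar>FFt y s\<bar> \<le> \<bar>B0\<bar> + \<bar>B1\<bar>"
    proof (cases "y = 0")
      case True
      then have "\<bar>FFt y s\<bar> \<le> B0" using B0 ys(2) by simp
      then show ?thesis by linarith
    next
      case False
      then have "y = 1" using ys(1) by simp
      then have "\<bar>FFt y s\<bar> \<le> B1" using B1 ys(2) by simp
      then show ?thesis by linarith
    qed
    have "z \<le> \<bar>mm th1 th2 n y s\<bar> + \<bar>FFt y s\<bar>" unfolding ys(3) Dd_def by (rule abs_triangle_ineq4)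
    then show "z \<le> 1 + (\<bar>B0\<bar> + \<bar>B1\<bar>)" using m f by linarith
  qed
  have ne: "S \<noteq> {}" using T unfolding S_def by auto
  define M where "M = Sup S"
  have upper: "\<bar>Dd y s\<bar> \<le> M" if "y \<in> {0,1}" "s \<in> {0..T}" for y s
  proof -
    have "(y, s) \<in> {0,1::real} \<times> {0..T}" using that by simp
    then have "(\<lambda>(y, s). \<bar>Dd y s\<bar>) (y, s) \<in> S" unfolding S_def by (rule imageI)
    then show ?thesis unfolding M_def using cSup_upper[OF _ bdd] by simp
  qed
  have M0: "0 \<le> M"
  proof -
    have "\<bar>Dd 0 0\<bar> \<le> M" using T by (intro upper) auto
    then show ?thesis by linarith
  qed
  have step: "\<bar>Dd y s\<bar> \<le> M * (1 - exp (- T))" if "y \<in> {0,1}" "s \<in> {0..T}" for y s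
  proof -
    have y01: "0 \<le> y" "y \<le> 1" and s0: "0 \<le> s" "s \<le> T" using that by auto
    interpret P: prob_space nuE by (rule prob_nuE)
    have "\<bar>Dd y s\<bar> \<le> (\<integral>e. M * indicator {..s} e \<partial>nuE)"
      unfolding D_eq(1)[OF y01 s0(1)]
    proof (rule integral_abs_bound_integral)
      show "integrable nuE (\<lambda>e. indicator {0..s} e * (flw th1 th2 e y * Dd 1 (s - e) + (1 - flw th1 th2 e y) * Dd 0 (s - e)))"
        by (rule D_eq(2)[OF y01 s0(1)])
      show "integrable nuE (\<lambda>e. M * indicator {..s} e)"
        by (intro integrable_mult_right integrable_real_indicator) (auto simp: less_top[symmetric] P.emeasure_finite)
      fix e :: real
      show "\<bar>indicator {0..s} e * (flw th1 th2 e y * Dd 1 (s - e) + (1 - flw th1 th2 e y) * Dd 0 (s - e))\<bar> \<le> M * indicator {..s} e"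
      proof (cases "e \<in> {0..s}")
        case True
        then have w: "0 \<le> flw th1 th2 e y" "flw th1 th2 e y \<le> 1" using flw_range[OF th1 th2 _ y01] by auto
        have d1: "\<bar>Dd 1 (s - e)\<bar> \<le> M" and d0: "\<bar>Dd 0 (s - e)\<bar> \<le> M" using True s0 by (auto intro!: upper)
        have "\<bar>flw th1 th2 e y * Dd 1 (s - e) + (1 - flw th1 th2 e y) * Dd 0 (s - e)\<bar>
            \<le> flw th1 th2 e y * \<bar>Dd 1 (s - e)\<bar> + (1 - flw th1 th2 e y) * \<bar>Dd 0 (s - e)\<bar>"
        proof -
          have "\<bar>flw th1 th2 e y * Dd 1 (s - e) + (1 - flw th1 th2 e y) * Dd 0 (s - e)\<bar>
            \<le> \<bar>flw th1 th2 e y * Dd 1 (s - e)\<bar> + \<bar>(1 - flw th1 th2 e y) * Dd 0 (s - e)\<bar>"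
            by (rule abs_triangle_ineq)
          also have "\<dots> = flw th1 th2 e y * \<bar>Dd 1 (s - e)\<bar> + (1 - flw th1 th2 e y) * \<bar>Dd 0 (s - e)\<bar>"
            using w by (simp add: abs_mult)
          finally show ?thesis .
        qed
        also have "\<dots> \<le> flw th1 th2 e y * M + (1 - flw th1 th2 e y) * M"
          using w d1 d0 by (intro add_mono mult_left_mono) auto
        finally show ?thesis using True by (simp add: algebra_simps)
      next
        case False
        then have "indicator {0..s} e = (0::real)" by simp
        moreover have "0 \<le> M * indicator {..s} e" using M0 by simp
        ultimately show ?thesis by simp
      qed
    qed
    also have "\<dots> = M * (1 - exp (- s))" using measure_nuE_le[OF s0(1)] by simp
    also have "\<dots> \<le> M * (1 - exp (- T))" using M0 s0 by (intro mult_left_mono) auto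
    finally show ?thesis .
  qed
  have "M \<le> M * (1 - exp (- T))"
    unfolding M_def
  proof (rule cSup_least[OF ne])
    fix z assume "z \<in> S"
    then obtain y s where ys: "y \<in> {0,1}" "s \<in> {0..T}" "z = \<bar>Dd y s\<bar>" using Sel by blast
    show "z \<le> Sup S * (1 - exp (- T))" using step[OF ys(1,2)] ys(3) unfolding M_def by simp
  qed
  then have "M * exp (- T) \<le> 0" by (simp add: algebra_simps)
  then have "M \<le> 0" by (simp add: mult_le_0_iff)
  then show ?thesis using upper[OF y s] by simp
qed

lemma mm_FF:
  assumes t: "0 \<le> t" and x: "0 \<le> x" "x \<le> 1"
  shows "mm th1 th2 n x t = FFt x t"
proof -
  have "Kr th1 th2 n x t (mm th1 th2 n 1) (mm th1 th2 n 0) e = Kr th1 th2 n x t (FFt 1) (FFt 0) e" for e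
  proof (cases "e \<in> {0..t}")
    case True
    then have "Dd 1 (t - e) = 0" "Dd 0 (t - e) = 0" using t by (auto intro!: D_zero[of t])
    then show ?thesis unfolding Kr_def[OF th1 th2] Dd_def by simp
  qed (simp add: Kr_def[OF th1 th2])
  then show ?thesis
    using renewal(1)[OF th1 th2 t x] Kr_F[OF t] by (simp add: has_bochner_integral_iff)
qed

end

theorem corollary1:
  fixes \<theta>\<^sub>1 \<theta>\<^sub>2 \<theta> p x t :: real and n :: nat
  assumes "\<theta>\<^sub>1 > 0" and "\<theta>\<^sub>2 > 0"
    and "\<theta> = \<theta>\<^sub>1 + \<theta>\<^sub>2" and "p = \<theta>\<^sub>1 / \<theta>"
    and "0 \<le> x" and "x \<le> 1" and "0 \<le> t"
  shows "(\<integral>\<omega>. (fv_xi \<theta>\<^sub>1 \<theta>\<^sub>2 x \<omega> t - p) ^ n \<partial>fv_space) =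
      exp (- t * (1 + real n * \<theta> / 2)) * (x - p) ^ n
    + (2 / \<theta>) / (real n + 2 / \<theta>) * (p * (1 - p) ^ n + (-1) ^ n * (1 - p) * p ^ n)
        * (1 - exp (- t * (1 + real n * \<theta> / 2)))
    + (x - p) * exp (- \<theta> * t / 2) * (2 / \<theta>) / (real n - 1 + 2 / \<theta>)
        * ((1 - p) ^ n - (-1) ^ n * p ^ n)
        * (1 - exp (- t * (1 + (real n - 1) * \<theta> / 2)))"
proof -
  have thp: "0 < \<theta>" using assms by simp
  have TH: "TH \<theta>\<^sub>1 \<theta>\<^sub>2 = \<theta>" using assms by (simp add: TH_def)
  have PP: "PP \<theta>\<^sub>1 \<theta>\<^sub>2 = p" using assms by (simp add: PP_def)
  have "(\<integral>\<omega>. (fv_xi \<theta>\<^sub>1 \<theta>\<^sub>2 x \<omega> t - p) ^ n \<partial>fv_space) = mm \<theta>\<^sub>1 \<theta>\<^sub>2 n x t"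
    unfolding mm_eq[OF assms(1,2)] PP ..
  also have "\<dots> = FF (TH \<theta>\<^sub>1 \<theta>\<^sub>2) (PP \<theta>\<^sub>1 \<theta>\<^sub>2) n x t"
    using mm_FF[OF assms(1,2,7,5,6)] .
  also have "\<dots> = FF \<theta> p n x t" using TH PP by simp
  finally show ?thesis unfolding FF_def[OF thp] .
qed

end
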